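(* Let $n\ge 3$ and $f=x^n+a_{n-1}x^{n-1}+\cdots+a_0\in\mathbb{C}[x]$ with roots $r_1,\ldots,r_n$ (with multiplicity). For each integer $m$ put $\varphi_m(x)=f^{(m)}(x)/m!$ if $1\le m\le n$ and $\varphi_m=0$ if $m\le 0$ or $m>n$. Let $M$ be the infinite matrix with entries $M_{2s-1,l}=\varphi_{2(l-s)+2}$, $M_{2s,l}=\varphi_{2(l-s)+1}$ ($s,l\ge1$), and let $H(x)$ be its $(n-2)$th leading principal minor. If indices $i,j,k\in\{1,\ldots,n\}$ satisfy $i<j$, $j\ne k$, $k\ne i$ and $r_k=(r_i+r_j)/2$, then $H(r_k)=0$.
   Context: $f^{(m)}$ is the $m$th derivative of $f$ with respect to $x$. *)

theory Defs
  imports "HOL-Analysis.Analysis" "HOL-Computational_Algebra.Polynomial"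
begin

definition det_nat :: "nat \<Rightarrow> (nat \<Rightarrow> nat \<Rightarrow> 'a::comm_ring_1) \<Rightarrow> 'a" where
  "det_nat N A = (\<Sum>p | p permutes {1..N}. of_int (sign p) * (\<Prod>i\<in>{1..N}. A i (p i)))"

definition phi :: "complex poly \<Rightarrow> int \<Rightarrow> complex poly" where
  "phi f m = (if 1 \<le> m \<and> m \<le> int (degree f)
     then smult (inverse (fact (nat m))) ((pderiv ^^ nat m) f) else 0)"

(* entries of the infinite matrix M (rows/columns indexed from 1):
   M_{2s-1,l} = phi_{2(l-s)+2},  M_{2s,l} = phi_{2(l-s)+1} *)
definition Mentry :: "complex poly \<Rightarrow> nat \<Rightarrow> nat \<Rightarrow> complex poly" where
  "Mentry f r l = (if odd r
     then phi f (2 * (int l - int ((r + 1) div 2)) + 2)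
     else phi f (2 * (int l - int (r div 2)) + 1))"

definition Hpoly :: "complex poly \<Rightarrow> complex poly" where
  "Hpoly f = det_nat (degree f - 2) (Mentry f)"

end

theory Submission imports Defs "Jordan_Normal_Form.Determinant" begin

lemma det_nat_jnf:
  fixes A :: "nat \<Rightarrow> nat \<Rightarrow> 'a::comm_ring_1"
  shows "det_nat N A = det (mat N N (\<lambda>(i,j). A (Suc i) (Suc j)))"
proof -
  have bij: "bij_betw Suc {0..<N} {1..N}"
    by (simp add: bij_betw_def image_Suc_atLeastLessThan atLeastLessThanSuc_atLeastAtMost)
  let ?F = "\<lambda>\<pi> x. if x \<in> {1..N} then Suc (\<pi> (inv_into {0..<N} Suc x)) else x"
  have F: "bij_betw ?F {\<pi>. \<pi> permutes {0..<N}} {\<pi>. \<pi> permutes {1..N}}"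
    by (rule bij_betw_permutations[OF bij])
  have Fmp: "?F p = map_permutation {0..<N} Suc p" for p
    unfolding map_permutation_def restrict_id_def
    by (auto simp: fun_eq_iff image_Suc_atLeastLessThan atLeastLessThanSuc_atLeastAtMost)
  have "det_nat N A = (\<Sum>p\<in>{\<pi>. \<pi> permutes {0..<N}}. of_int (sign (?F p)) * (\<Prod>i\<in>{1..N}. A i (?F p i)))"
    unfolding det_nat_def by (rule sum.reindex_bij_betw[OF F, symmetric])
  also have "\<dots> = (\<Sum>p\<in>{\<pi>. \<pi> permutes {0..<N}}. of_int (sign p) * (\<Prod>i\<in>{0..<N}. A (Suc i) (Suc (p i))))"
  proof (rule sum.cong[OF refl])
    fix p assume p: "p \<in> {\<pi>. \<pi> permutes {0..<N}}"
    have s: "sign (?F p) = sign p" unfolding Fmp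
      using p by (intro sign_map_permutation) auto
    have "(\<Prod>i\<in>{1..N}. A i (?F p i)) = (\<Prod>i\<in>{0..<N}. A (Suc i) (?F p (Suc i)))"
      by (rule prod.reindex_bij_betw[OF bij, symmetric])
    also have "\<dots> = (\<Prod>i\<in>{0..<N}. A (Suc i) (Suc (p i)))"
      by (rule prod.cong) auto
    finally show "of_int (sign (?F p)) * (\<Prod>i\<in>{1..N}. A i (?F p i)) = of_int (sign p) * (\<Prod>i\<in>{0..<N}. A (Suc i) (Suc (p i)))"
      using s by simp
  qed
  also have "\<dots> = det (mat N N (\<lambda>(i,j). A (Suc i) (Suc j)))"
    unfolding det_def by simp
  finally show ?thesis .
qed

lemma det_nat_zero_left_kernel:
  fixes B :: "nat \<Rightarrow> nat \<Rightarrow> complex"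
  assumes K: "\<And>l. l \<in> {1..N} \<Longrightarrow> (\<Sum>r\<in>{1..N}. w r * B r l) = 0"
    and nz: "rr \<in> {1..N}" "w rr \<noteq> 0"
  shows "det_nat N B = 0"
proof -
  let ?M = "mat N N (\<lambda>(i,j). B (Suc i) (Suc j))"
  have M: "?M \<in> carrier_mat N N" by simp
  let ?v = "vec N (\<lambda>i. w (Suc i))"
  have v: "?v \<in> carrier_vec N" by simp
  have vnz: "?v \<noteq> 0\<^sub>v N"
  proof
    assume "?v = 0\<^sub>v N"
    hence "?v $ (rr - 1) = 0\<^sub>v N $ (rr - 1)" by simp
    with nz show False by auto
  qed
  have "transpose_mat ?M *\<^sub>v ?v = 0\<^sub>v N"
  proof (rule eq_vecI)
    fix i assume i: "i < dim_vec (0\<^sub>v N :: complex vec)"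
    hence i': "i < N" by simp
    have "(transpose_mat ?M *\<^sub>v ?v) $ i = (\<Sum>j<N. B (Suc j) (Suc i) * w (Suc j))"
      using i' by (simp add: mult_mat_vec_def scalar_prod_def row_def atLeast0LessThan)
    also have "\<dots> = (\<Sum>r\<in>{1..N}. w r * B r (Suc i))"
      by (subst sum.reindex_bij_betw[symmetric, where h=Suc and S="{..<N}"])
         (auto simp: bij_betw_def image_Suc_lessThan mult.commute)
    also have "\<dots> = 0" using K[of "Suc i"] i' by simp
    finally show "(transpose_mat ?M *\<^sub>v ?v) $ i = 0\<^sub>v N $ i" using i' by simp
  qed auto
  hence "det (transpose_mat ?M) = 0"
  proof -
    have Mt: "transpose_mat ?M \<in> carrier_mat N N" by simp
    show ?thesis using det_0_iff_vec_prod_zero[OF Mt] v vnz \<open>transpose_mat ?M *\<^sub>v ?v = 0\<^sub>v N\<close> by blast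
  qed
  thus ?thesis using det_transpose[OF M] det_nat_jnf[of N B] by simp
qed

lemma poly_det_nat: "poly (det_nat N A) x = det_nat N (\<lambda>i l. poly (A i l) x)"
  unfolding det_nat_def by (simp add: poly_sum poly_prod)

lemma coeff_pcompose_neg: "coeff (pcompose p [:0,-1:]) t = (-1)^t * coeff (p::complex poly) t"
proof (induction p arbitrary: t rule: pCons_induct)
  case 0 thus ?case by simp
next
  case (pCons a p)
  show ?case
  proof (cases t)
    case 0 thus ?thesis by (simp add: pcompose_pCons)
  next
    case (Suc t')
    thus ?thesis using pCons.IH[of t'] by (simp add: pcompose_pCons)
  qed
qed

lemma higher_pderiv_shift:
  "(pderiv^^m) (pcompose f [:a,1:]) = pcompose ((pderiv^^m) f) [:a,1::complex:]"
  by (induction m) (auto simp: pderiv_pcompose pderiv_pCons)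

lemma taylor_coeff:
  "poly ((pderiv^^m) f) a = fact m * coeff (pcompose f [:a,1::complex:]) m"
proof -
  have "poly ((pderiv^^m) f) a = poly (pcompose ((pderiv^^m) f) [:a,1:]) 0"
    by (simp add: poly_pcompose)
  also have "\<dots> = coeff ((pderiv^^m) (pcompose f [:a,1:])) 0"
    by (simp add: higher_pderiv_shift poly_0_coeff_0)
  also have "\<dots> = fact m * coeff (pcompose f [:a,1:]) m"
    by (simp add: coeff_higher_pderiv pochhammer_fact)
  finally show ?thesis .
qed

lemma odd_half: "odd (r::nat) \<Longrightarrow> 2 * int ((r + 1) div 2) = int r + 1"
  by (elim oddE) simp
lemma even_half: "even (r::nat) \<Longrightarrow> 2 * int (r div 2) = int r"
  by (elim evenE) simp

lemma sum_key:
  fixes q h :: "complex poly" and N l :: nat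
  assumes dq: "degree q < N" and l: "l \<ge> 1"
    and odd0: "coeff (pcompose q [:0,-1:] * h) (2*l - 1) = 0"
  shows "(\<Sum>t<N. (-1)^t * coeff q t * (if t \<le> 2*l - 1 then coeff h (2*l - 1 - t) else 0)) = 0"
proof -
  define F where "F t = (-1)^t * coeff q t * (if t \<le> 2*l - 1 then coeff h (2*l - 1 - t) else 0)" for t
  have z: "coeff q t = 0" if "t \<ge> N" for t using dq that by (intro coeff_eq_0) simp
  have "(\<Sum>t<N. F t) = (\<Sum>t<N+2*l. F t)"
    by (rule sum.mono_neutral_left) (auto simp: F_def z)
  also have "\<dots> = (\<Sum>t\<le>2*l-1. (-1)^t * coeff q t * coeff h (2*l - 1 - t))"
    by (rule sum.mono_neutral_cong_right) (use l in \<open>auto simp: F_def\<close>)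
  also have "\<dots> = coeff (pcompose q [:0,-1:] * h) (2*l - 1)"
    by (simp add: coeff_mult coeff_pcompose_neg)
  finally show ?thesis using odd0 by (simp add: F_def)
qed

lemma odd_coeff_zero:
  fixes P :: "complex poly"
  assumes "pcompose P [:0,-1:] = P" and "odd m"
  shows "coeff P m = 0"
proof -
  have "coeff P m = (-1)^m * coeff P m" using coeff_pcompose_neg[of P m] assms(1) by simp
  with assms(2) show ?thesis by simp
qed

theorem lemma1:
  fixes f :: "complex poly" and n :: nat and r :: "nat \<Rightarrow> complex" and i j k :: nat
  assumes "n \<ge> 3"
    and "degree f = n" and "lead_coeff f = 1"
    and "f = (\<Prod>t\<in>{1..n}. [:- r t, 1:])"
    and "i \<in> {1..n}" and "j \<in> {1..n}" and "k \<in> {1..n}"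
    and "i < j" and "j \<noteq> k" and "k \<noteq> i"
    and "r k = (r i + r j) / 2"
  shows "poly (Hpoly f) (r k) = 0"
proof -
  define g where "g = pcompose f [:r k, 1:]"
  define d where "d = r j - r k"
  define S where "S = {1..n} - {i,j,k}"
  define q where "q = (\<Prod>t\<in>S. [:r k - r t, 1:])"
  define h where "h = [:-(d*d), 0, 1:] * q"
  define N where "N = n - 2"
  have g_prod: "g = (\<Prod>t\<in>{1..n}. [:r k - r t, 1:])"
    unfolding g_def assms(4) pcompose_prod by (simp add: pcompose_pCons)
  have set: "{1..n} = insert k (insert i (insert j S))"
    using assms(5-10) by (auto simp: S_def)
  have fin: "finite S" by (simp add: S_def)
  have "g = [:r k - r k, 1:] * ([:r k - r i, 1:] * ([:r k - r j, 1:] * q))"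
    unfolding g_prod set q_def using fin assms(5-10) by (simp add: S_def)
  also have "r k - r i = d" using assms(11) by (simp add: d_def field_simps)
  also have "r k - r j = -d" by (simp add: d_def)
  finally have "g = [:0, 1:] * ([:d, 1:] * ([:-d, 1:] * q))" by simp
  hence g_h: "g = pCons 0 h" unfolding h_def
    by (simp add: mult_pCons_left algebra_simps)
  have qnz: "q \<noteq> 0" unfolding q_def using fin by (simp)
  have degg: "degree g = n" unfolding g_def using assms(2) by (simp add: degree_pcompose)
  have dh: "degree h = degree q + 2"
    unfolding h_def by (subst degree_mult_eq) (use qnz in auto)
  have "h \<noteq> 0"
  proof
    assume "h = 0" with dh show False by simp
  qed
  hence "degree g = degree q + 3" unfolding g_h using dh by simp
  hence dq: "degree q = N - 1" using degg assms(1) by (simp add: N_def)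
  have N1: "N \<ge> 1" using assms(1) by (simp add: N_def)
  have cval: "poly (phi f m) (r k) = (if m \<ge> 1 then coeff g (nat m) else 0)" for m
  proof -
    consider "m < 1" | "1 \<le> m \<and> m \<le> int n" | "m > int n" by linarith
    thus ?thesis
    proof cases
      case 1 thus ?thesis by (simp add: phi_def)
    next
      case 2 thus ?thesis using taylor_coeff[of "nat m" f "r k"]
        by (simp add: phi_def assms(2) g_def)
    next
      case 3
      hence "coeff g (nat m) = 0" using degg by (intro coeff_eq_0) linarith
      thus ?thesis using 3 by (simp add: phi_def assms(2))
    qed
  qed
  define Hc where "Hc t = (if t \<ge> 0 then coeff h (nat t) else 0)" for t :: int
  have entry: "poly (Mentry f a l) (r k) = Hc (2 * int l - int a)" if "a \<ge> 1" for a l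
  proof -
    have arg: "poly (Mentry f a l) (r k) = poly (phi f (2 * int l - int a + 1)) (r k)"
    proof (cases "odd a")
      case True
      have e: "2 * (int l - int ((a + 1) div 2)) + 2 = 2 * int l - int a + 1"
        using odd_half[OF True] by (simp add: algebra_simps)
      show ?thesis by (simp only: Mentry_def if_P[OF True] e)
    next
      case False
      have e: "2 * (int l - int (a div 2)) + 1 = 2 * int l - int a + 1"
        using even_half[of a] False by (simp add: algebra_simps)
      show ?thesis by (simp only: Mentry_def if_not_P[OF False] e)
    qed
    show ?thesis unfolding arg cval Hc_def g_h
      by (auto simp: nat_add_distrib coeff_pCons split: nat.splits)
  qed
  define P where "P = pcompose q [:0,-1:] * h"
  have negneg: "pcompose (pcompose q [:0,-1:]) [:0,-1:] = q"
    by (simp add: pcompose_assoc[symmetric] pcompose_pCons)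
  have quad: "pcompose [:-(d*d), 0, 1:] [:0,-1:] = [:-(d*d), 0, 1:]"
    by (simp add: pcompose_pCons)
  have Peven: "pcompose P [:0,-1:] = P"
    unfolding P_def h_def pcompose_mult negneg quad by (simp only: ac_simps)
  define w where "w a = (-1)^(a - 1) * coeff q (a - 1)" for a
  have "poly (Hpoly f) (r k) = det_nat N (\<lambda>a l. poly (Mentry f a l) (r k))"
    unfolding Hpoly_def poly_det_nat assms(2) N_def ..
  also have "\<dots> = 0"
  proof (rule det_nat_zero_left_kernel[where w=w and rr=N])
    fix l assume l: "l \<in> {1..N}"
    have "(\<Sum>a\<in>{1..N}. w a * poly (Mentry f a l) (r k)) = (\<Sum>a\<in>{1..N}. w a * Hc (2 * int l - int a))"
      by (rule sum.cong) (auto simp: entry)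
    also have "\<dots> = (\<Sum>t<N. w (Suc t) * Hc (2 * int l - int (Suc t)))"
      by (rule sum.reindex_bij_betw[symmetric, where h=Suc])
         (auto simp: bij_betw_def image_Suc_lessThan)
    also have "\<dots> = (\<Sum>t<N. (-1)^t * coeff q t * (if t \<le> 2*l - 1 then coeff h (2*l - 1 - t) else 0))"
    proof (rule sum.cong[OF refl])
      fix t assume "t \<in> {..<N}"
      have "Hc (2 * int l - int (Suc t)) = (if t \<le> 2*l - 1 then coeff h (2*l - 1 - t) else 0)"
      proof (cases "t \<le> 2*l - 1")
        case True
        hence "nat (2 * int l - int (Suc t)) = 2*l - 1 - t" using l by auto
        moreover have "2 * int l - int (Suc t) \<ge> 0" using True l by auto
        ultimately show ?thesis using True unfolding Hc_def by simp
      next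
        case False
        hence "\<not> 2 * int l - int (Suc t) \<ge> 0" by linarith
        thus ?thesis using False unfolding Hc_def by simp
      qed
      thus "w (Suc t) * Hc (2 * int l - int (Suc t)) = (-1)^t * coeff q t * (if t \<le> 2*l - 1 then coeff h (2*l - 1 - t) else 0)"
        by (simp add: w_def)
    qed
    also have "\<dots> = 0"
      apply (rule sum_key)
      using dq N1 l apply simp_all
      using odd_coeff_zero[OF Peven, of "2*l - 1"] l unfolding P_def by simp
    finally show "(\<Sum>a\<in>{1..N}. w a * poly (Mentry f a l) (r k)) = 0" .
  next
    show "N \<in> {1..N}" using N1 by simp
    have "coeff q (degree q) \<noteq> 0" using qnz by simp
    thus "w N \<noteq> 0" using dq by (simp add: w_def)
  qed
  finally show ?thesis .
qed

end
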